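(* Let $p\in(1,2]$ and let $\varphi:\mathbb{R}^n\to\mathbb{R}\cup\{+\infty\}$ be proper and lower semicontinuous. Suppose $\bar x=0$ is a $p$-calm point of $\varphi$ with constant $M>0$, $\varphi(0)=0$, and $\varphi$ is $q$-prox-regular with some $q\ge2$ at $\bar x=0$ for $\bar\zeta=0\in\partial\varphi(0)$ with constants $\varepsilon>0$ and $\rho>0$. Then for each $\gamma\in\big(0,\frac{2^{1-p}}{Mp}\big)$ when $p\in(1,2)$, and each $\gamma\in\big(0,\min\{\frac1{4M},\frac1\rho\}\big)$ when $p=2$, there exists a neighbourhood $U$ of $0$ such that $\operatorname{prox}^p_{\gamma\varphi}$ is single-valued and continuous on $U$ and $\varphi^p_\gamma\in C^1(U)$.
   Context: $\operatorname{prox}^p_{\gamma\varphi}(x):=\operatorname{argmin}_{y}\big(\varphi(y)+\frac{1}{p\gamma}\|x-y\|^p\big)$, $\varphi^p_\gamma(x):=\inf_y\big(\varphi(y)+\frac{1}{p\gamma}\|x-y\|^p\big)$. $\bar x$ is a $p$-calm point with constant $M>0$ if $\varphi(x)+M\|x-\bar x\|^p>\varphi(\bar x)$ for all $x\neq\bar x$. $\partial$ denotes the Mordukhovich (limiting) subdifferential. $\varphi$ is $q$-prox-regular ($q\ge2$) at $\bar x\in\operatorname{dom}\varphi$ for $\bar\zeta\in\partial\varphi(\bar x)$ with constants $\varepsilon>0,\rho\ge0$ if $\varphi(x')\ge\varphi(x)+\langle\zeta,x'-x\rangle-\frac\rho2\|x'-x\|^q$ for all $x'\in\mathbb{B}(\bar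 x;\varepsilon)$, whenever $x\in\mathbb{B}(\bar x;\varepsilon)$, $\zeta\in\partial\varphi(x)\cap\mathbb{B}(\bar\zeta;\varepsilon)$ and $\varphi(x)<\varphi(\bar x)+\varepsilon$. *)

theory Defs
  imports "HOL-Analysis.Analysis" "HOL-Library.Extended_Real"
begin

definition proper_fun :: "('a \<Rightarrow> ereal) \<Rightarrow> bool" where
  "proper_fun \<phi> \<longleftrightarrow> (\<forall>x. \<phi> x \<noteq> -\<infinity>) \<and> (\<exists>x. \<phi> x \<noteq> \<infinity>)"

definition lsc :: "('a::topological_space \<Rightarrow> ereal) \<Rightarrow> bool" where
  "lsc \<phi> \<longleftrightarrow> (\<forall>x. \<phi> x \<le> Liminf (at x) \<phi>)"

definition frechet_subdiff :: "('a::real_inner \<Rightarrow> ereal) \<Rightarrow> 'a \<Rightarrow> 'a set" where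
  "frechet_subdiff \<phi> x = {\<zeta>. \<bar>\<phi> x\<bar> \<noteq> \<infinity> \<and>
     (\<forall>e>0. \<exists>d>0. \<forall>y. norm (y - x) < d \<longrightarrow>
         \<phi> y \<ge> \<phi> x + ereal (inner \<zeta> (y - x) - e * norm (y - x)))}"

definition limiting_subdiff :: "('a::real_inner \<Rightarrow> ereal) \<Rightarrow> 'a \<Rightarrow> 'a set" where
  "limiting_subdiff \<phi> x = {\<zeta>. \<bar>\<phi> x\<bar> \<noteq> \<infinity> \<and>
     (\<exists>xs zs. xs \<longlonglongrightarrow> x \<and> (\<lambda>k. \<phi> (xs k)) \<longlonglongrightarrow> \<phi> x \<and> zs \<longlonglongrightarrow> \<zeta> \<and>
              (\<forall>k. zs k \<in> frechet_subdiff \<phi> (xs k)))}"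

definition p_calm :: "real \<Rightarrow> ('a::real_normed_vector \<Rightarrow> ereal) \<Rightarrow> 'a \<Rightarrow> real \<Rightarrow> bool" where
  "p_calm p \<phi> xb M \<longleftrightarrow> (\<forall>x. x \<noteq> xb \<longrightarrow> \<phi> x + ereal (M * norm (x - xb) powr p) > \<phi> xb)"

definition q_prox_regular ::
  "real \<Rightarrow> ('a::real_inner \<Rightarrow> ereal) \<Rightarrow> 'a \<Rightarrow> 'a \<Rightarrow> real \<Rightarrow> real \<Rightarrow> bool" where
  "q_prox_regular q \<phi> xb \<zeta>b \<epsilon> \<rho> \<longleftrightarrow>
     \<bar>\<phi> xb\<bar> \<noteq> \<infinity> \<and> \<zeta>b \<in> limiting_subdiff \<phi> xb \<and> \<epsilon> > 0 \<and> \<rho> \<ge> 0 \<and>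
     (\<forall>x \<zeta>. x \<in> cball xb \<epsilon> \<and> \<zeta> \<in> limiting_subdiff \<phi> x \<inter> cball \<zeta>b \<epsilon> \<and>
            \<phi> x < \<phi> xb + ereal \<epsilon> \<longrightarrow>
        (\<forall>x' \<in> cball xb \<epsilon>.
           \<phi> x' \<ge> \<phi> x + ereal (inner \<zeta> (x' - x) - \<rho> / 2 * norm (x' - x) powr q)))"

definition prox :: "real \<Rightarrow> real \<Rightarrow> ('a::real_normed_vector \<Rightarrow> ereal) \<Rightarrow> 'a \<Rightarrow> 'a set" where
  "prox p \<gamma> \<phi> x = {y. \<forall>z. \<phi> y + ereal (norm (x - y) powr p / (p * \<gamma>))
                          \<le> \<phi> z + ereal (norm (x - z) powr p / (p * \<gamma>))}"

definition moreau_env :: "real \<Rightarrow> real \<Rightarrow> ('a::real_normed_vector \<Rightarrow> ereal) \<Rightarrow> 'a \<Rightarrow> ereal" where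
  "moreau_env p \<gamma> \<phi> x = (INF y. \<phi> y + ereal (norm (x - y) powr p / (p * \<gamma>)))"

definition C1_on :: "'a::real_inner set \<Rightarrow> ('a \<Rightarrow> ereal) \<Rightarrow> bool" where
  "C1_on U f \<longleftrightarrow> (\<exists>F g. (\<forall>x\<in>U. f x = ereal (F x) \<and>
        (F has_derivative (\<lambda>h. inner (g x) h)) (at x)) \<and> continuous_on U g)"

end

theory Submission
  imports Defs
begin


lemma L1:
  fixes p R a b :: real
  assumes p1: "1 < p" and p2: "p \<le> 2" and R: "0 < R" and a: "0 \<le> a" "a \<le> R" and b: "0 \<le> b" "b \<le> R"
  shows "(p*(p-1)*R powr (p-2)/2) * (a-b)^2 \<le> b powr p + (p-1) * a powr p - p * a powr (p-1) * b"
proof -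
  define c where "c = p*(p-1)*R powr (p-2)/2"
  have Rp: "R powr (p-2) > 0" using R by simp
  have c1: "c \<le> R powr (p-2)"
  proof -
    have "p*(p-1) \<le> 2" using p1 p2 mult_mono[of p 2 "p-1" 1] by auto
    hence "p*(p-1)*R powr (p-2) \<le> 2 * R powr (p-2)" using Rp by (intro mult_right_mono) auto
    thus ?thesis unfolding c_def by simp
  qed
  have c2: "c \<le> (p-1) * R powr (p-2)"
  proof -
    have "p/2 \<le> 1" using p2 by simp
    hence "(p/2) * ((p-1)*R powr (p-2)) \<le> 1 * ((p-1)*R powr (p-2))" using Rp p1 by (intro mult_right_mono) auto
    moreover have "c = (p/2) * ((p-1)*R powr (p-2))" unfolding c_def by simp
    ultimately show ?thesis by simp
  qed
  have sq: "t powr p \<ge> R powr (p-2) * t^2" if t: "0 \<le> t" "t \<le> R" for t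
  proof (cases "t = 0")
    case True thus ?thesis by simp
  next
    case False
    hence tp: "t > 0" using t by simp
    have "t powr p = t powr (p-2) * t powr 2" by (simp add: powr_add[symmetric])
    also have "t powr 2 = t^2" using tp by (simp add: powr_realpow)
    finally have e: "t powr p = t powr (p-2) * t^2" .
    have "R powr (p-2) \<le> t powr (p-2)" using powr_mono2'[of "p-2" t R] tp t p2 by simp
    thus ?thesis unfolding e by (intro mult_right_mono) auto
  qed
  show ?thesis
  proof (cases "a = 0")
    case True
    have "c * b^2 \<le> R powr (p-2) * b^2" using c1 by (intro mult_right_mono) auto
    also have "\<dots> \<le> b powr p" using sq b by simp
    finally show ?thesis using True p1 by (simp add: c_def)
  next
    case anz: False
    hence ap: "a > 0" using a by simp
    show ?thesis
    proof (cases "b = 0")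
      case True
      have "c * a^2 \<le> (p-1) * R powr (p-2) * a^2" using c2 by (intro mult_right_mono) auto
      also have "\<dots> \<le> (p-1) * a powr p" using sq[of a] a p1 by (simp add: mult.assoc)
      finally show ?thesis using True by (simp add: c_def)
    next
      case False
      hence bp: "b > 0" using b by simp
      define m where "m t = p * t powr (p-1) - 2*c*t" for t
      have dm: "DERIV m t :> p*((p-1) * t powr (p-1-1)) - 2*c" if "t > 0" for t
        unfolding m_def using that
        by (auto intro!: derivative_eq_intros has_real_derivative_powr)
      have mmono: "m s \<le> m t" if "0 < s" "s \<le> t" "t \<le> R" for s t
      proof (rule DERIV_nonneg_imp_nondecreasing[OF \<open>s \<le> t\<close>])
        fix x assume x: "s \<le> x" "x \<le> t"
        have "R powr (p-2) \<le> x powr (p-2)" using powr_mono2'[of "p-2" x R] x that p2 by simp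
        hence "p*(p-1)*R powr (p-2) \<le> p*(p-1)* x powr (p-2)" using p1 by (intro mult_left_mono) auto
        moreover have "2*c = p*(p-1)*R powr (p-2)" unfolding c_def by simp
        moreover have "p-1-1 = p-2" by simp
        ultimately have "0 \<le> p*((p-1) * x powr (p-1-1)) - 2*c" by (simp add: mult.assoc)
        thus "\<exists>y. DERIV m x :> y \<and> 0 \<le> y" using dm[of x] x that by auto
      qed
      define k where "k t = t powr p - a powr p - p * a powr (p-1) * (t - a) - c*(t-a)^2" for t
      have dk: "DERIV k t :> m t - m a" if "t > 0" for t
      proof -
        have "DERIV k t :> p * t powr (p-1) - p * a powr (p-1) * 1 - c*(2*(t-a)^1*1)"
          unfolding k_def using that
          by (auto intro!: derivative_eq_intros has_real_derivative_powr)
        thus ?thesis unfolding m_def by (simp add: algebra_simps)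
      qed
      have "k a \<le> k b"
      proof (cases "a \<le> b")
        case True
        show ?thesis
        proof (rule DERIV_nonneg_imp_nondecreasing[OF True])
          fix x assume x: "a \<le> x" "x \<le> b"
          thus "\<exists>y. DERIV k x :> y \<and> 0 \<le> y" using dk[of x] mmono[of a x] ap b by auto
        qed
      next
        case False
        show ?thesis
        proof (rule deriv_nonpos_imp_antimono[of b a k "\<lambda>t. m t - m a"])
          fix x assume x: "x \<in> {b..a}"
          thus "(k has_real_derivative m x - m a) (at x)" using dk[of x] bp by auto
          show "m x - m a \<le> 0" using mmono[of x a] x bp a by auto
        qed (use False in auto)
      qed
      moreover have "k a = 0" unfolding k_def by simp
      moreover have "a powr (p-1) * a = a powr p"
        using ap powr_add[of a "p-1" 1] by simp
      hence e2: "p * a powr (p-1) * (b - a) = p * a powr (p-1) * b - p * a powr p"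
        by (simp add: algebra_simps)
      ultimately have "0 \<le> b powr p - a powr p - (p * a powr (p-1) * b - p * a powr p) - c*(b-a)^2"
        unfolding k_def e2 by simp
      moreover have "(b-a)^2 = (a-b)^2" by (simp add: power2_commute)
      ultimately show ?thesis unfolding c_def by (simp add: algebra_simps)
    qed
  qed
qed

definition gp :: "real \<Rightarrow> 'a::real_inner \<Rightarrow> 'a" where
  "gp p u = (norm u powr (p-2)) *\<^sub>R u"

lemma L2:
  fixes u v :: "'a::real_inner" and p R :: real
  assumes p1: "1 < p" and p2: "p \<le> 2" and R: "0 < R" and u: "norm u \<le> R" and v: "norm v \<le> R"
  shows "norm u powr p + p * inner (gp p u) (v - u) + (p*(p-1)*R powr (p-2)/2) * (norm (v-u))^2
           \<le> norm v powr p"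
proof -
  define c where "c = p*(p-1)*R powr (p-2)/2"
  define a where "a = norm u"
  define b where "b = norm v"
  define w where "w = inner u v"
  have a0: "0 \<le> a" "a \<le> R" and b0: "0 \<le> b" "b \<le> R" using u v by (auto simp: a_def b_def)
  have L: "c * (a-b)^2 \<le> b powr p + (p-1) * a powr p - p * a powr (p-1) * b"
    using L1[OF p1 p2 R a0 b0] by (simp add: c_def)
  have nd: "(norm (v-u))^2 = b^2 + a^2 - 2*w"
    by (simp add: power2_norm_eq_inner a_def b_def w_def inner_diff_left inner_diff_right inner_commute)
  have sab: "w \<le> a*b" unfolding w_def a_def b_def by (rule norm_cauchy_schwarz)
  show ?thesis
  proof (cases "u = 0")
    case True
    hence "a = 0" by (simp add: a_def)
    thus ?thesis using True L p1 by (simp add: gp_def c_def b_def power2_eq_square)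
  next
    case False
    hence ap: "a > 0" by (simp add: a_def)
    define X where "X = a powr (p-2)"
    have "a powr p = a powr (p-2) * a powr 2" by (simp add: powr_add[symmetric])
    moreover have "a powr 2 = a^2" using ap by (simp add: powr_realpow)
    ultimately have e1: "a powr p = X * a^2" unfolding X_def by simp
    have e2: "a powr (p-1) = X * a" unfolding X_def using ap powr_add[of a "p-2" 1] by simp
    have gi: "inner (gp p u) (v - u) = X * (w - a^2)"
      by (simp add: gp_def X_def a_def w_def inner_diff_right power2_norm_eq_inner right_diff_distrib)
    have "R powr (p-2) \<le> X" unfolding X_def using powr_mono2'[of "p-2" a R] ap a0 p2 by simp
    moreover have "(p-1)*R powr (p-2) \<le> 1 * R powr (p-2)" by (intro mult_right_mono) (use p2 in auto)
    ultimately have "(p-1)*R powr (p-2) \<le> X" by simp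
    hence "p*((p-1)*R powr (p-2)) \<le> p * X" by (intro mult_left_mono) (use p1 in auto)
    hence cX: "2*c \<le> p*X" by (simp add: c_def)
    have "(a*b - w) * (p*X - 2*c) \<ge> 0" using sab cX by simp
    hence "w*(p*X - 2*c) \<le> a*b*(p*X - 2*c)" by (simp add: algebra_simps)
    hence F: "w*(p*X - 2*c) \<le> a*b*(p*X - 2*c)" .
    have id: "X * a^2 + p * (X * (w - a^2)) + c * (b^2 + a^2 - 2*w)
       = - (b powr p + (p-1) * (X * a^2) - p * (X * a) * b - c * (a-b)^2) + b powr p
         + (w*(p*X - 2*c) - a*b*(p*X - 2*c))"
      by (simp add: algebra_simps power2_eq_square)
    have L': "c * (a-b)^2 \<le> b powr p + (p-1) * (X * a^2) - p * (X * a) * b"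
      using L unfolding e1 e2 .
    have "X * a^2 + p * (X * (w - a^2)) + c * (b^2 + a^2 - 2*w) \<le> b powr p"
      unfolding id using L' F by linarith
    hence "a powr p + p * (X * (w - a^2)) + c * (b^2 + a^2 - 2*w) \<le> b powr p" unfolding e1 .
    thus ?thesis unfolding gi nd by (simp add: a_def b_def c_def)
  qed
qed

lemma L3:
  fixes u1 u2 :: "'a::real_inner" and p R :: real
  assumes p1: "1 < p" and p2: "p \<le> 2" and R: "0 < R" and u: "norm u1 \<le> R" "norm u2 \<le> R"
  shows "(p-1) * R powr (p-2) * (norm (u1-u2))^2 \<le> inner (gp p u1 - gp p u2) (u1 - u2)"
proof -
  define c where "c = p*(p-1)*R powr (p-2)/2"
  have A: "norm u1 powr p + p * inner (gp p u1) (u2 - u1) + c * (norm (u2-u1))^2 \<le> norm u2 powr p"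
    using L2[OF p1 p2 R u(1) u(2)] by (simp add: c_def)
  have B: "norm u2 powr p + p * inner (gp p u2) (u1 - u2) + c * (norm (u1-u2))^2 \<le> norm u1 powr p"
    using L2[OF p1 p2 R u(2) u(1)] by (simp add: c_def)
  have n: "norm (u2-u1) = norm (u1-u2)" by (simp add: norm_minus_commute)
  have i: "inner (gp p u2) (u1 - u2) = - inner (gp p u2) (u2 - u1)" by (simp add: inner_diff_right)
  have "inner (gp p u1 - gp p u2) (u1 - u2) = - inner (gp p u1) (u2 - u1) - inner (gp p u2) (u1 - u2)"
    by (simp add: inner_diff_left inner_diff_right)
  hence "2 * c * (norm (u1-u2))^2 \<le> p * inner (gp p u1 - gp p u2) (u1 - u2)"
    using A B n by (simp add: algebra_simps)
  moreover have "2 * c = p * ((p-1) * R powr (p-2))" by (simp add: c_def)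
  ultimately have "p * ((p-1) * R powr (p-2) * (norm (u1-u2))^2) \<le> p * inner (gp p u1 - gp p u2) (u1 - u2)"
    by (simp add: mult.assoc)
  thus ?thesis using p1 by simp
qed

lemma L4:
  fixes u v :: "'a::real_inner" and p :: real
  assumes p1: "1 < p" and p2: "p \<le> 2"
  shows "norm u powr p + p * inner (gp p u) (v - u) \<le> norm v powr p"
proof -
  define R where "R = max (norm u) (norm v) + 1"
  have R: "R > 0" "norm u \<le> R" "norm v \<le> R" unfolding R_def
    by (auto simp: max_def add_nonneg_pos)
  have "0 \<le> (p*(p-1)*R powr (p-2)/2) * (norm (v-u))^2" using p1 by simp
  thus ?thesis using L2[OF p1 p2 R] by linarith
qed

lemma L5: "norm (gp p u) = norm u powr (p-1)" for u :: "'a::real_inner"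
proof (cases "u = 0")
  case True thus ?thesis by (simp add: gp_def)
next
  case False
  hence "norm u powr (p-2) * norm u = norm u powr (p-1)"
    using powr_add[of "norm u" "p-2" 1] by simp
  thus ?thesis by (simp add: gp_def)
qed

lemma L6:
  assumes p1: "1 < p"
  shows "isCont (gp p) (u::'a::real_inner)"
proof (cases "u = 0")
  case False
  thus ?thesis unfolding gp_def by (intro continuous_intros) auto
next
  case True
  have n0: "((\<lambda>w::'a. norm w) \<longlongrightarrow> 0) (at 0)" using tendsto_norm[OF tendsto_ident_at[of "0::'a" UNIV]] by simp
  have "((\<lambda>w::'a. norm w powr (p-1)) \<longlongrightarrow> 0) (at 0)"
    by (rule tendsto_zero_powrI[OF n0 tendsto_const]) (use p1 in auto)
  hence "((\<lambda>w::'a. norm (gp p w)) \<longlongrightarrow> 0) (at 0)" by (simp add: L5)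
  hence "(gp p \<longlongrightarrow> 0) (at (0::'a))" by (simp add: tendsto_norm_zero_iff)
  thus ?thesis using True by (simp add: isCont_def gp_def)
qed



locale S =
  fixes \<phi> :: "'a::euclidean_space \<Rightarrow> ereal" and p M \<gamma> \<rho> q \<epsilon> :: real
  assumes p1: "1 < p" and p2: "p \<le> 2" and notminf: "\<And>x. \<phi> x \<noteq> -\<infinity>" and lsc: "lsc \<phi>"
    and M: "M > 0" and calm: "p_calm p \<phi> 0 M" and phi0: "\<phi> 0 = 0"
    and q: "q \<ge> 2" and eps: "\<epsilon> > 0" and rho: "\<rho> > 0"
    and preg: "q_prox_regular q \<phi> 0 0 \<epsilon> \<rho>"
    and gpos: "0 < \<gamma>" and gM: "M*p*\<gamma> < 1" and g2: "p = 2 \<Longrightarrow> \<gamma>*\<rho> < 1"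
begin

definition Phi where "Phi x y = \<phi> y + ereal (norm (x - y) powr p / (p*\<gamma>))"
definition \<eta> where "\<eta> = (1 - M*p*\<gamma>)/4"
definition \<kappa> where "\<kappa> = (1 - M*p*\<gamma>)/(2*p*\<gamma>)"

lemma eta_pos: "\<eta> > 0" and eta_le: "\<eta> \<le> 1/4" and kappa_pos: "\<kappa> > 0" and pg_pos: "p*\<gamma> > 0"
  using gM M p1 gpos by (auto simp: \<eta>_def \<kappa>_def)

lemma prox_iff: "y \<in> prox p \<gamma> \<phi> x \<longleftrightarrow> (\<forall>z. Phi x y \<le> Phi x z)"
  by (simp add: prox_def Phi_def)

lemma env_eq: "moreau_env p \<gamma> \<phi> x = (INF y. Phi x y)"
  by (simp add: moreau_env_def Phi_def)

lemma S1: "ereal (- M * norm y powr p) \<le> \<phi> y"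
proof (cases "y = 0")
  case True thus ?thesis by (simp add: phi0)
next
  case False
  hence c: "\<phi> y + ereal (M * norm y powr p) > 0" using calm phi0 by (simp add: p_calm_def)
  show ?thesis
  proof (cases "\<phi> y")
    case (real r) thus ?thesis using c by simp
  next
    case PInf thus ?thesis by simp
  next
    case MInf thus ?thesis using notminf by simp
  qed
qed

lemma S2:
  assumes "norm x \<le> \<eta> * norm y"
  shows "\<kappa> * norm y powr p \<le> norm (x - y) powr p / (p*\<gamma>) - M * norm y powr p"
proof -
  have e: "0 < 1 - \<eta>" "1 - \<eta> \<le> 1" using eta_pos eta_le by auto
  have "(1 - \<eta>) * norm y \<le> norm (x - y)"
    using assms norm_triangle_ineq2[of y x] by (simp add: norm_minus_commute algebra_simps)
  hence "((1 - \<eta>) * norm y) powr p \<le> norm (x - y) powr p"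
    using e p1 by (intro powr_mono2) auto
  hence A: "(1 - \<eta>) powr p * norm y powr p \<le> norm (x - y) powr p"
    using e by (simp add: powr_mult)
  have "(1 - \<eta>) powr 2 \<le> (1 - \<eta>) powr p" using powr_mono'[of p 2 "1-\<eta>"] e p2 by simp
  moreover have "(1 - \<eta>) powr 2 = (1 - \<eta>)^2" using e by (simp add: powr_realpow)
  moreover have "1 - 2*\<eta> \<le> (1-\<eta>)^2" by (simp add: power2_eq_square algebra_simps)
  ultimately have "(1 - 2*\<eta>) * norm y powr p \<le> (1 - \<eta>) powr p * norm y powr p"
    by (intro mult_right_mono) auto
  with A have B: "(1 - 2*\<eta>) * norm y powr p / (p*\<gamma>) \<le> norm (x - y) powr p / (p*\<gamma>)"
    using pg_pos by (simp add: divide_right_mono)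
  have "\<kappa> = (1 - 2*\<eta>) / (p*\<gamma>) - M" using gpos p1 unfolding \<kappa>_def \<eta>_def
    by (simp add: field_simps)
  hence "\<kappa> * norm y powr p = (1 - 2*\<eta>) / (p*\<gamma>) * norm y powr p - M * norm y powr p"
    by (simp add: left_diff_distrib)
  hence "\<kappa> * norm y powr p = (1 - 2*\<eta>) * norm y powr p / (p*\<gamma>) - M * norm y powr p"
    by simp
  with B show ?thesis by linarith
qed

lemma Phi_lower: "ereal (- M * (norm x / \<eta>) powr p) \<le> Phi x y"
proof -
  have f0: "0 \<le> norm (x - y) powr p / (p*\<gamma>)" using pg_pos by simp
  show ?thesis
  proof (cases "norm x \<le> \<eta> * norm y")
    case True
    have "0 \<le> \<kappa> * norm y powr p" using kappa_pos by simp
    moreover have "0 \<le> M * (norm x/\<eta>) powr p" using M by simp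
    ultimately have "- M * (norm x / \<eta>) powr p \<le> - M * norm y powr p + norm (x - y) powr p / (p*\<gamma>)"
      using S2[OF True] by linarith
    hence "ereal (- M * (norm x / \<eta>) powr p) \<le> ereal (- M * norm y powr p + norm (x - y) powr p / (p*\<gamma>))"
      by simp
    also have "\<dots> \<le> Phi x y" unfolding Phi_def
      using add_right_mono[OF S1[of y], of "ereal (norm (x - y) powr p / (p*\<gamma>))"] by simp
    finally show ?thesis .
  next
    case False
    hence "norm y \<le> norm x / \<eta>" using eta_pos by (simp add: field_simps)
    hence "norm y powr p \<le> (norm x / \<eta>) powr p" using p1 by (intro powr_mono2) auto
    hence "M * norm y powr p \<le> M * (norm x / \<eta>) powr p" using M by simp
    hence "ereal (- M * (norm x / \<eta>) powr p) \<le> ereal (- M * norm y powr p + norm (x - y) powr p / (p*\<gamma>))"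
      using f0 by simp
    also have "\<dots> \<le> Phi x y" unfolding Phi_def
      using add_right_mono[OF S1[of y], of "ereal (norm (x - y) powr p / (p*\<gamma>))"] by simp
    finally show ?thesis .
  qed
qed

lemma Phi_sublevel:
  assumes "Phi x y \<le> ereal A"
  shows "norm y \<le> max (norm x / \<eta>) ((A/\<kappa>) powr (1/p))"
proof (cases "norm x \<le> \<eta> * norm y")
  case True
  have "ereal (- M * norm y powr p + norm (x - y) powr p / (p*\<gamma>)) \<le> Phi x y"
    unfolding Phi_def
      using add_right_mono[OF S1[of y], of "ereal (norm (x - y) powr p / (p*\<gamma>))"] by simp
  from order_trans[OF this assms] have "- M * norm y powr p + norm (x - y) powr p / (p*\<gamma>) \<le> A" by simp
  with S2[OF True] have "\<kappa> * norm y powr p \<le> A" by simp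
  hence le: "norm y powr p \<le> A/\<kappa>" using kappa_pos by (simp add: field_simps)
  have "norm y = (norm y powr p) powr (1/p)" using p1 by (simp add: powr_powr)
  also have "\<dots> \<le> (A/\<kappa>) powr (1/p)" using le p1 by (intro powr_mono2) auto
  finally show ?thesis by simp
next
  case False
  hence "norm y \<le> norm x / \<eta>" using eta_pos by (simp add: field_simps)
  thus ?thesis by simp
qed

definition C where "C = max (1/\<eta>) ((1/(\<kappa>*p*\<gamma>)) powr (1/p))"

lemma C_pos: "C > 0"
proof -
  have "1/\<eta> \<le> C" unfolding C_def by (rule max.cobounded1)
  thus ?thesis using eta_pos by (meson less_le_trans zero_less_divide_1_iff)
qed

lemma Phi0: "Phi x 0 = ereal (norm x powr p / (p*\<gamma>))" by (simp add: Phi_def phi0)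

lemma S4:
  assumes y: "y \<in> prox p \<gamma> \<phi> x"
  shows "Phi x y \<le> ereal (norm x powr p / (p*\<gamma>))"
    and "\<phi> y \<le> ereal (norm x powr p / (p*\<gamma>))"
    and "\<bar>\<phi> y\<bar> \<noteq> \<infinity>"
    and "norm y \<le> C * norm x"
proof -
  show A: "Phi x y \<le> ereal (norm x powr p / (p*\<gamma>))" using y Phi0[of x] unfolding prox_iff by metis
  have "\<phi> y \<le> Phi x y" unfolding Phi_def using pg_pos
    by (intro ereal_le_add_self) simp
  thus B: "\<phi> y \<le> ereal (norm x powr p / (p*\<gamma>))" using A by simp
  thus "\<bar>\<phi> y\<bar> \<noteq> \<infinity>" using notminf[of y] by auto
  define K where "K = (1/(\<kappa>*p*\<gamma>)) powr (1/p)"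
  have "(norm x powr p / (p*\<gamma>) / \<kappa>) = norm x powr p * (1/(\<kappa>*p*\<gamma>))" by simp
  moreover have "(norm x powr p * (1/(\<kappa>*p*\<gamma>))) powr (1/p) = (norm x powr p) powr (1/p) * K"
    unfolding K_def using kappa_pos pg_pos by (intro powr_mult)
  moreover have "(norm x powr p) powr (1/p) = norm x" using p1 by (simp add: powr_powr)
  ultimately have "(norm x powr p / (p*\<gamma>) / \<kappa>) powr (1/p) = norm x * K" by (simp add: ac_simps)
  hence "norm y \<le> max (norm x / \<eta>) (norm x * K)" using Phi_sublevel[OF A] by simp
  moreover have "norm x * (1/\<eta>) \<le> norm x * C" unfolding C_def
    by (intro mult_left_mono) auto
  moreover have "norm x * K \<le> norm x * C" unfolding C_def K_def
    by (intro mult_left_mono) auto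
  ultimately show "norm y \<le> C * norm x" by (simp add: mult.commute)
qed

lemma lsc_eps:
  assumes "ereal t < \<phi> y0"
  shows "\<exists>e>0. \<forall>y. dist y y0 < e \<longrightarrow> ereal t < \<phi> y"
proof -
  have "\<phi> y0 = min (\<phi> y0) (Liminf (at y0) \<phi>)" using lsc by (simp add: lsc_def min_def)
  also have "\<dots> = (SUP e\<in>{0<..}. INF y\<in>ball y0 e. \<phi> y)" by (rule min_Liminf_at)
  finally have "ereal t < (SUP e\<in>{0<..}. INF y\<in>ball y0 e. \<phi> y)" using assms by simp
  then obtain e where e: "e > 0" "ereal t < (INF y\<in>ball y0 e. \<phi> y)" by (auto simp: less_SUP_iff)
  show ?thesis
  proof (intro exI[of _ e] conjI allI impI)
    fix y assume "dist y y0 < e"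
    hence "y \<in> ball y0 e" by (simp add: dist_commute)
    thus "ereal t < \<phi> y" using less_INF_D[OF e(2)] by blast
  qed (use e in auto)
qed

lemma h_cont: "isCont (\<lambda>y. norm (x - y) powr p / (p*\<gamma>)) y0"
  unfolding isCont_def using p1 gpos by (auto intro!: tendsto_intros)

lemma Phi_lsc_eps:
  assumes "ereal t < Phi x y0"
  shows "\<exists>e>0. \<forall>y. dist y y0 < e \<longrightarrow> ereal t < Phi x y"
proof -
  define h where "h y = norm (x - y) powr p / (p*\<gamma>)" for y
  obtain t2 where t2: "t - h y0 < t2" "ereal t2 < \<phi> y0"
  proof (cases "\<phi> y0")
    case (real r)
    hence "t - h y0 < r" using assms by (simp add: Phi_def h_def)
    thus ?thesis using that[of "(t - h y0 + r)/2"] real by simp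
  next
    case PInf thus ?thesis using that[of "t - h y0 + 1"] by simp
  next
    case MInf thus ?thesis using notminf by simp
  qed
  obtain e1 where e1: "e1 > 0" "\<And>y. dist y y0 < e1 \<Longrightarrow> ereal t2 < \<phi> y"
    using lsc_eps[OF t2(2)] by blast
  have "isCont h y0" unfolding h_def by (rule h_cont)
  then obtain e2 where e2: "e2 > 0" "\<And>y. dist y y0 < e2 \<Longrightarrow> dist (h y) (h y0) < t2 - (t - h y0)"
    unfolding continuous_at_eps_delta using t2(1) by (metis diff_gt_0_iff_gt)
  show ?thesis
  proof (intro exI[of _ "min e1 e2"] conjI allI impI)
    fix y assume "dist y y0 < min e1 e2"
    hence a: "ereal t2 < \<phi> y" and b: "dist (h y) (h y0) < t2 - (t - h y0)" using e1 e2 by auto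
    from b have hb: "t - t2 < h y" by (simp add: dist_real_def abs_less_iff)
    show "ereal t < Phi x y"
    proof (cases "\<phi> y")
      case (real r)
      thus ?thesis using a hb by (simp add: Phi_def h_def)
    next
      case PInf thus ?thesis by (simp add: Phi_def)
    next
      case MInf thus ?thesis using notminf by simp
    qed
  qed (use e1 e2 in auto)
qed

lemma S5: "\<exists>y. y \<in> prox p \<gamma> \<phi> x"
proof -
  define m where "m = (INF y. Phi x y)"
  have mlow: "ereal (- M * (norm x / \<eta>) powr p) \<le> m" unfolding m_def by (rule INF_greatest) (rule Phi_lower)
  have mup: "m \<le> ereal (norm x powr p / (p*\<gamma>))" unfolding m_def using INF_lower[of 0 UNIV "Phi x"] Phi0[of x] by simp
  obtain m0 where m0: "m = ereal m0" using mlow mup by (cases m) auto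
  have "\<forall>k::nat. \<exists>y. Phi x y < ereal (m0 + 1/Suc k)"
  proof
    fix k :: nat
    have "m < ereal (m0 + 1/Suc k)" using m0 by simp
    thus "\<exists>y. Phi x y < ereal (m0 + 1/Suc k)" unfolding m_def by (simp add: INF_less_iff)
  qed
  then obtain ys where ys: "\<And>k. Phi x (ys k) < ereal (m0 + 1/Suc k)" by metis
  define B where "B = max (norm x / \<eta>) (((m0+1)/\<kappa>) powr (1/p))"
  have "\<forall>k. ys k \<in> cball 0 B"
  proof
    fix k
    have "1/Suc k \<le> (1::real)" by simp
    hence "Phi x (ys k) \<le> ereal (m0 + 1)" using ys[of k] by (meson ereal_less_eq(3) add_left_mono less_imp_le order_trans)
    thus "ys k \<in> cball 0 B" using Phi_sublevel unfolding B_def by auto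
  qed
  moreover have "seq_compact (cball (0::'a) B)" by (rule compact_imp_seq_compact) simp
  ultimately obtain l r where r: "strict_mono r" "(ys \<circ> r) \<longlonglongrightarrow> l"
    using seq_compactE by metis
  have "Phi x l \<le> ereal m0"
  proof (rule ccontr)
    assume "\<not> Phi x l \<le> ereal m0"
    hence lt: "ereal m0 < Phi x l" by simp
    obtain t where t: "m0 < t" "ereal t < Phi x l"
    proof (cases "Phi x l")
      case (real r')
      thus ?thesis using that[of "(m0 + r')/2"] lt by simp
    next
      case PInf thus ?thesis using that[of "m0+1"] by simp
    next
      case MInf thus ?thesis using lt by simp
    qed
    obtain e where e: "e > 0" "\<And>y. dist y l < e \<Longrightarrow> ereal t < Phi x y"
      using Phi_lsc_eps[OF t(2)] by blast
    obtain N1 where N1: "\<And>n. n \<ge> N1 \<Longrightarrow> dist ((ys \<circ> r) n) l < e"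
      using r(2) e(1) unfolding lim_sequentially by blast
    obtain N2 :: nat where N2: "1 / Suc N2 < t - m0"
      using t(1) by (metis diff_gt_0_iff_gt nat_approx_posE)
    define n where "n = max N1 N2"
    have "N2 \<le> r n" using seq_suble[OF r(1), of n] by (simp add: n_def)
    hence "1 / real (Suc (r n)) \<le> 1 / Suc N2" by (simp add: frac_le)
    hence "ereal (m0 + 1/Suc (r n)) \<le> ereal t" using N2 by simp
    hence "Phi x (ys (r n)) < ereal t" using less_le_trans[OF ys[of "r n"]] by blast
    moreover have "ereal t < Phi x (ys (r n))" using e(2) N1[of n] by (simp add: n_def)
    ultimately show False by simp
  qed
  hence "\<forall>z. Phi x l \<le> Phi x z" using m0 unfolding m_def by (metis INF_lower UNIV_I order_trans)
  thus ?thesis by (auto simp: prox_iff)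
qed

lemma S6:
  assumes y: "y \<in> prox p \<gamma> \<phi> x"
  shows "(1/\<gamma>) *\<^sub>R gp p (x - y) \<in> limiting_subdiff \<phi> y"
proof -
  define \<zeta> where "\<zeta> = (1/\<gamma>) *\<^sub>R gp p (x - y)"
  have fin: "\<bar>\<phi> y\<bar> \<noteq> \<infinity>" using S4(3)[OF y] .
  have "\<zeta> \<in> frechet_subdiff \<phi> y"
    unfolding frechet_subdiff_def
  proof (intro CollectI conjI fin allI impI)
    fix e :: real assume e: "e > 0"
    have "isCont (gp p) (x - y)" using L6 p1 by blast
    then obtain d where d: "d > 0" "\<And>w. dist w (x - y) < d \<Longrightarrow> dist (gp p w) (gp p (x - y)) < e*\<gamma>"
      unfolding continuous_at_eps_delta using e gpos by (metis mult_pos_pos)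
    show "\<exists>d>0. \<forall>z. norm (z - y) < d \<longrightarrow> \<phi> y + ereal (inner \<zeta> (z - y) - e * norm (z - y)) \<le> \<phi> z"
    proof (intro exI[of _ d] conjI allI impI)
      fix z assume z: "norm (z - y) < d"
      have "dist (x - z) (x - y) < d" using z by (simp add: dist_norm norm_minus_commute)
      hence gd: "norm (gp p (x - z) - gp p (x - y)) \<le> e*\<gamma>" using d(2) by (simp add: dist_norm less_imp_le)
      have cv: "norm (x - z) powr p + p * inner (gp p (x - z)) (z - y) \<le> norm (x - y) powr p"
        using L4[OF p1 p2, of "x - z" "x - y"] by simp
      have cs: "- inner (gp p (x - z) - gp p (x - y)) (z - y) \<le> e*\<gamma> * norm (z - y)"
        using norm_cauchy_schwarz[of "-(gp p (x - z) - gp p (x - y))" "z - y"] gd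
        by (smt (verit) inner_minus_left mult_right_mono norm_ge_zero norm_minus_cancel)
      define fy where "fy = norm (x - y) powr p / (p*\<gamma>)"
      define fz where "fz = norm (x - z) powr p / (p*\<gamma>)"
      have "(norm (x - z) powr p + p * inner (gp p (x - z)) (z - y)) / (p*\<gamma>) \<le> fy"
        using cv pg_pos unfolding fy_def by (simp add: divide_right_mono)
      moreover have "(norm (x - z) powr p + p * inner (gp p (x - z)) (z - y)) / (p*\<gamma>)
          = fz + inner (gp p (x - z)) (z - y) / \<gamma>"
        using p1 gpos unfolding fz_def by (simp add: field_simps)
      ultimately have "fz + inner (gp p (x - z)) (z - y) / \<gamma> \<le> fy" by simp
      moreover have "inner \<zeta> (z - y) = inner (gp p (x - y)) (z - y) / \<gamma>"
        by (simp add: \<zeta>_def)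
      moreover have "inner (gp p (x - z)) (z - y) = inner (gp p (x - y)) (z - y) + inner (gp p (x - z) - gp p (x - y)) (z - y)"
        by (simp add: inner_diff_left)
      moreover have "- inner (gp p (x - z) - gp p (x - y)) (z - y) / \<gamma> \<le> e * norm (z - y)"
        using cs gpos by (simp add: field_simps)
      ultimately have key: "inner \<zeta> (z - y) - e * norm (z - y) \<le> fy - fz"
        by (simp add: add_divide_distrib)
      have mn: "\<phi> y + ereal fy \<le> \<phi> z + ereal fz" using y unfolding prox_iff Phi_def fy_def fz_def by blast
      show "\<phi> y + ereal (inner \<zeta> (z - y) - e * norm (z - y)) \<le> \<phi> z"
      proof (cases "\<phi> z")
        case PInf thus ?thesis by simp
      next
        case MInf thus ?thesis using notminf by simp
      next
        case (real rz)
        obtain ry where ry: "\<phi> y = ereal ry" using fin by (cases "\<phi> y") auto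
        show ?thesis using mn key real ry by simp
      qed
    qed (use d in auto)
  qed
  moreover have "\<zeta> \<in> frechet_subdiff \<phi> y \<Longrightarrow> \<zeta> \<in> limiting_subdiff \<phi> y"
    unfolding limiting_subdiff_def
    by (intro CollectI conjI fin exI[of _ "\<lambda>k. y"] exI[of _ "\<lambda>k. \<zeta>"]) auto
  ultimately show ?thesis unfolding \<zeta>_def by blast
qed

end


context S begin

lemma ev_powr0: "a > 0 \<Longrightarrow> c > 0 \<Longrightarrow> ((\<lambda>d::real. (c*d) powr a) \<longlongrightarrow> 0) (at_right 0)"
proof -
  assume a: "a > 0" and c: "c > 0"
  have "((\<lambda>d::real. c*d) \<longlongrightarrow> c*0) (at_right 0)" by (intro tendsto_intros)
  hence t: "((\<lambda>d::real. c*d) \<longlongrightarrow> 0) (at_right 0)" by simp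
  have "\<forall>\<^sub>F d in at_right 0. 0 \<le> c*(d::real)"
    using eventually_at_right_less[of "0::real"] by eventually_elim (use c in simp)
  thus ?thesis by (rule tendsto_zero_powrI[OF t tendsto_const _ a])
qed

lemma delta_exists:
  "\<exists>\<delta>>0. C*\<delta> \<le> \<epsilon> \<and> \<delta> powr p / (p*\<gamma>) < \<epsilon> \<and> ((1+C)*\<delta>) powr (p-1) / \<gamma> \<le> \<epsilon>
      \<and> 2*C*\<delta> \<le> 1 \<and> \<rho>*\<gamma> < (p-1) * ((1+C)*\<delta>) powr (p-2)"
proof -
  have Cp: "C > 0" "1 + C > 0" using C_pos by auto
  have e0: "\<forall>\<^sub>F d in at_right 0. (0::real) < d" by (rule eventually_at_right_less)
  have "((\<lambda>d::real. C*d) \<longlongrightarrow> C*0) (at_right 0)" by (intro tendsto_intros)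
  hence tC: "((\<lambda>d::real. C*d) \<longlongrightarrow> 0) (at_right 0)" by simp
  have e1: "\<forall>\<^sub>F d in at_right 0. C*d < \<epsilon>" using order_tendstoD(2)[OF tC eps] .
  have e4: "\<forall>\<^sub>F d in at_right 0. C*d < 1/2" using order_tendstoD(2)[OF tC, of "1/2"] by simp
  have "((\<lambda>d::real. (1*d) powr p) \<longlongrightarrow> 0) (at_right 0)" using ev_powr0[of p 1] p1 by simp
  hence "((\<lambda>d::real. d powr p / (p*\<gamma>)) \<longlongrightarrow> 0 / (p*\<gamma>)) (at_right 0)" using p1 gpos by (intro tendsto_intros) simp_all
  hence e2: "\<forall>\<^sub>F d in at_right 0. d powr p / (p*\<gamma>) < \<epsilon>" using order_tendstoD(2)[OF _ eps] by simp
  have "((\<lambda>d::real. ((1+C)*d) powr (p-1) / \<gamma>) \<longlongrightarrow> 0 / \<gamma>) (at_right 0)"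
    using ev_powr0[of "p-1" "1+C"] p1 Cp gpos by (intro tendsto_intros) simp_all
  hence e3: "\<forall>\<^sub>F d in at_right 0. ((1+C)*d) powr (p-1) / \<gamma> < \<epsilon>" using order_tendstoD(2)[OF _ eps] by simp
  have e5: "\<forall>\<^sub>F d in at_right 0. \<rho>*\<gamma> < (p-1) * ((1+C)*d) powr (p-2)"
  proof (cases "p = 2")
    case True
    show ?thesis using e0
    proof eventually_elim
      case (elim d)
      thus ?case using True g2 Cp by (simp add: mult.commute)
    qed
  next
    case False
    hence p2': "2 - p > 0" using p2 by simp
    have pos: "(p-1)/(\<rho>*\<gamma>) > 0" using p1 rho gpos by simp
    have "\<forall>\<^sub>F d in at_right 0. ((1+C)*d) powr (2-p) < (p-1)/(\<rho>*\<gamma>)"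
      using order_tendstoD(2)[OF ev_powr0[OF p2' Cp(2)] pos] .
    with e0 show ?thesis
    proof eventually_elim
      case (elim d)
      define X where "X = ((1+C)*d) powr (2-p)"
      have Xp: "X > 0" using elim Cp by (simp add: X_def)
      have "((1+C)*d) powr (p-2) = 1 / X" unfolding X_def
        using powr_minus_divide[of "(1+C)*d" "2-p"] by simp
      moreover have "\<rho>*\<gamma>*X < p - 1" using elim(2) rho gpos by (simp add: X_def field_simps)
      moreover have "\<rho>*\<gamma> < (p-1)/X" using \<open>\<rho>*\<gamma>*X < p - 1\<close> Xp by (simp add: pos_less_divide_eq)
      ultimately show ?case by simp
    qed
  qed
  hence ev: "\<forall>\<^sub>F d in at_right 0. 0 < d \<and> C*d < \<epsilon> \<and> d powr p / (p*\<gamma>) < \<epsilon> \<and> ((1+C)*d) powr (p-1) / \<gamma> < \<epsilon>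
      \<and> C*d < 1/2 \<and> \<rho>*\<gamma> < (p-1) * ((1+C)*d) powr (p-2)"
    using e0 e1 e2 e3 e4 by eventually_elim blast
  obtain d where "0 < d \<and> C*d < \<epsilon> \<and> d powr p / (p*\<gamma>) < \<epsilon> \<and> ((1+C)*d) powr (p-1) / \<gamma> < \<epsilon>
      \<and> C*d < 1/2 \<and> \<rho>*\<gamma> < (p-1) * ((1+C)*d) powr (p-2)"
    using eventually_happens'[OF _ ev] by auto
  thus ?thesis by (intro exI[of _ d]) auto
qed

end

locale S2 = S +
  fixes \<delta> :: real
  assumes dpos: "\<delta> > 0" and d1: "C*\<delta> \<le> \<epsilon>" and d2: "\<delta> powr p / (p*\<gamma>) < \<epsilon>"
    and d3: "((1+C)*\<delta>) powr (p-1) / \<gamma> \<le> \<epsilon>" and d4: "2*C*\<delta> \<le> 1"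
    and d5: "\<rho>*\<gamma> < (p-1) * ((1+C)*\<delta>) powr (p-2)"
begin

definition "Rr = (1+C)*\<delta>"
definition "U = ball (0::'a) \<delta>"
definition "lam = (p-1) * Rr powr (p-2)"
definition "\<theta> = lam - \<rho>*\<gamma>"
definition "Kc = 2 * Rr powr (p-1) + 4*\<rho>*\<gamma>*Rr + 2*\<rho>*\<gamma>*\<delta>"

lemma Rr_pos: "Rr > 0" using C_pos dpos by (simp add: Rr_def)
lemma theta_pos: "\<theta> > 0" using d5 by (simp add: \<theta>_def lam_def Rr_def)
lemma Kc_pos: "Kc > 0"
proof -
  have "0 < 2 * Rr powr (p-1)" using Rr_pos by simp
  moreover have "0 \<le> 4*\<rho>*\<gamma>*Rr" "0 \<le> 2*\<rho>*\<gamma>*\<delta>" using rho gpos Rr_pos dpos by auto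
  ultimately show ?thesis unfolding Kc_def by linarith
qed

lemma T1:
  assumes x: "x \<in> U" and y: "y \<in> prox p \<gamma> \<phi> x"
  shows "norm y \<le> C*\<delta>" "y \<in> cball 0 \<epsilon>" "norm (x - y) \<le> Rr" "\<phi> y < \<phi> 0 + ereal \<epsilon>"
    "(1/\<gamma>) *\<^sub>R gp p (x - y) \<in> limiting_subdiff \<phi> y \<inter> cball 0 \<epsilon>"
proof -
  have nx: "norm x < \<delta>" using x by (simp add: U_def)
  have "norm y \<le> C * norm x" by (rule S4(4)[OF y])
  also have "\<dots> \<le> C * \<delta>" using nx C_pos by simp
  finally show ny: "norm y \<le> C*\<delta>" .
  thus "y \<in> cball 0 \<epsilon>" using d1 by simp
  have "norm (x - y) \<le> norm x + norm y" by (rule norm_triangle_ineq4)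
  also have "\<dots> \<le> \<delta> + C*\<delta>" using nx ny by simp
  finally show nu: "norm (x - y) \<le> Rr" by (simp add: Rr_def algebra_simps)
  have "norm x powr p \<le> \<delta> powr p" using nx p1 by (intro powr_mono2) auto
  hence "norm x powr p / (p*\<gamma>) \<le> \<delta> powr p / (p*\<gamma>)" using pg_pos by (simp add: divide_right_mono)
  hence "norm x powr p / (p*\<gamma>) < \<epsilon>" using d2 by simp
  thus "\<phi> y < \<phi> 0 + ereal \<epsilon>" using S4(2)[OF y] phi0 by (simp add: le_less_trans)
  have "norm ((1/\<gamma>) *\<^sub>R gp p (x - y)) = norm (x - y) powr (p-1) / \<gamma>" using gpos by (simp add: L5)
  also have "\<dots> \<le> Rr powr (p-1) / \<gamma>" using nu p1 gpos by (intro divide_right_mono powr_mono2) auto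
  also have "\<dots> \<le> \<epsilon>" using d3 by (simp add: Rr_def)
  finally have "(1/\<gamma>) *\<^sub>R gp p (x - y) \<in> cball 0 \<epsilon>" by simp
  thus "(1/\<gamma>) *\<^sub>R gp p (x - y) \<in> limiting_subdiff \<phi> y \<inter> cball 0 \<epsilon>" using S6[OF y] by simp
qed

lemma preg_at:
  assumes x: "x \<in> U" and y: "y \<in> prox p \<gamma> \<phi> x" and z: "z \<in> cball 0 \<epsilon>"
  shows "\<phi> y + ereal (inner ((1/\<gamma>) *\<^sub>R gp p (x - y)) (z - y) - \<rho>/2 * norm (z - y) powr q) \<le> \<phi> z"
  using preg T1[OF x y] z unfolding q_prox_regular_def by blast

lemma T2:
  assumes x1: "x1 \<in> U" and y1: "y1 \<in> prox p \<gamma> \<phi> x1" and x2: "x2 \<in> U" and y2: "y2 \<in> prox p \<gamma> \<phi> x2"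
  shows "- (\<rho>*\<gamma>) * (norm (y1 - y2))^2 \<le> inner (gp p (x1 - y1) - gp p (x2 - y2)) (y1 - y2)"
proof -
  define D where "D = norm (y1 - y2) powr q"
  have A: "\<phi> y1 + ereal (inner ((1/\<gamma>) *\<^sub>R gp p (x1 - y1)) (y2 - y1) - \<rho>/2 * D) \<le> \<phi> y2"
    using preg_at[OF x1 y1 T1(2)[OF x2 y2]] by (simp add: D_def norm_minus_commute)
  have B: "\<phi> y2 + ereal (inner ((1/\<gamma>) *\<^sub>R gp p (x2 - y2)) (y1 - y2) - \<rho>/2 * D) \<le> \<phi> y1"
    using preg_at[OF x2 y2 T1(2)[OF x1 y1]] by (simp add: D_def)
  obtain r1 where r1: "\<phi> y1 = ereal r1" using S4(3)[OF y1] by (cases "\<phi> y1") auto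
  obtain r2 where r2: "\<phi> y2 = ereal r2" using S4(3)[OF y2] by (cases "\<phi> y2") auto
  have "inner ((1/\<gamma>) *\<^sub>R gp p (x1 - y1)) (y2 - y1) + inner ((1/\<gamma>) *\<^sub>R gp p (x2 - y2)) (y1 - y2) \<le> \<rho> * D"
    using A B r1 r2 by simp
  moreover have "inner ((1/\<gamma>) *\<^sub>R gp p (x1 - y1)) (y2 - y1) + inner ((1/\<gamma>) *\<^sub>R gp p (x2 - y2)) (y1 - y2)
      = - inner (gp p (x1 - y1) - gp p (x2 - y2)) (y1 - y2) / \<gamma>"
    using gpos by (simp add: inner_diff_left inner_diff_right field_simps)
  ultimately have "- inner (gp p (x1 - y1) - gp p (x2 - y2)) (y1 - y2) / \<gamma> \<le> \<rho> * D"
    by linarith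
  hence "\<gamma> * (- inner (gp p (x1 - y1) - gp p (x2 - y2)) (y1 - y2) / \<gamma>) \<le> \<gamma> * (\<rho> * D)"
    using gpos by (intro mult_left_mono) auto
  hence E: "- inner (gp p (x1 - y1) - gp p (x2 - y2)) (y1 - y2) \<le> \<rho> * \<gamma> * D"
    using gpos by (simp add: mult.commute mult.left_commute)
  define t where "t = norm (y1 - y2)"
  have t1: "t \<le> 1"
  proof -
    have "t \<le> norm y1 + norm y2" unfolding t_def by (rule norm_triangle_ineq4)
    also have "\<dots> \<le> C*\<delta> + C*\<delta>" using T1(1)[OF x1 y1] T1(1)[OF x2 y2] by linarith
    finally show ?thesis using d4 by (simp add: mult.commute mult.left_commute)
  qed
  have "D \<le> t^2"
  proof (cases "t = 0")
    case True thus ?thesis using q by (simp add: D_def t_def)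
  next
    case False
    hence "t > 0" by (simp add: t_def)
    have "t powr q \<le> t powr 2" using powr_mono'[of 2 q t] q t1 by (simp add: t_def)
    thus ?thesis using \<open>t > 0\<close> by (simp add: D_def t_def powr_realpow)
  qed
  hence "\<rho> * \<gamma> * D \<le> \<rho> * \<gamma> * t^2" using rho gpos by simp
  with E show ?thesis by (simp add: t_def)
qed

lemma KE:
  assumes x1: "x1 \<in> U" and y1: "y1 \<in> prox p \<gamma> \<phi> x1" and x2: "x2 \<in> U" and y2: "y2 \<in> prox p \<gamma> \<phi> x2"
  shows "\<theta> * (norm ((x1 - y1) - (x2 - y2)))^2 \<le> Kc * norm (x1 - x2)"
proof -
  define u1 where "u1 = x1 - y1"
  define u2 where "u2 = x2 - y2"
  define a where "a = norm (x1 - x2)"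
  define b where "b = norm (u1 - u2)"
  define G where "G = gp p u1 - gp p u2"
  have nu: "norm u1 \<le> Rr" "norm u2 \<le> Rr" using T1(3)[OF x1 y1] T1(3)[OF x2 y2] by (auto simp: u1_def u2_def)
  have i: "lam * b^2 \<le> inner G (u1 - u2)"
    using L3[OF p1 p2 Rr_pos nu] by (simp add: lam_def b_def G_def)
  have ii: "- (\<rho>*\<gamma>) * (norm (y1 - y2))^2 \<le> inner G (y1 - y2)"
    using T2[OF x1 y1 x2 y2] by (simp add: G_def u1_def u2_def)
  have dy: "y1 - y2 = (x1 - x2) - (u1 - u2)" by (simp add: u1_def u2_def)
  have iii: "inner G (y1 - y2) = inner G (x1 - x2) - inner G (u1 - u2)" unfolding dy by (simp add: inner_diff_right)
  have nG: "norm G \<le> 2 * Rr powr (p-1)"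
  proof -
    have "norm G \<le> norm (gp p u1) + norm (gp p u2)" unfolding G_def by (rule norm_triangle_ineq4)
    also have "\<dots> = norm u1 powr (p-1) + norm u2 powr (p-1)" by (simp add: L5)
    also have "\<dots> \<le> Rr powr (p-1) + Rr powr (p-1)" using nu p1 by (intro add_mono powr_mono2) auto
    finally show ?thesis by simp
  qed
  have iv: "inner G (x1 - x2) \<le> 2 * Rr powr (p-1) * a"
  proof -
    have "inner G (x1 - x2) \<le> norm G * a" unfolding a_def by (rule norm_cauchy_schwarz)
    also have "\<dots> \<le> 2 * Rr powr (p-1) * a" using nG by (intro mult_right_mono) (auto simp: a_def)
    finally show ?thesis .
  qed
  have "norm (y1 - y2) \<le> a + b" unfolding dy a_def b_def by (rule norm_triangle_ineq4)
  hence v: "(norm (y1 - y2))^2 \<le> (a + b)^2" by (intro power_mono) auto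
  have "lam * b^2 \<le> 2 * Rr powr (p-1) * a + \<rho>*\<gamma> * (a + b)^2"
  proof -
    have "\<rho>*\<gamma> * (norm (y1 - y2))^2 \<le> \<rho>*\<gamma> * (a + b)^2" using v rho gpos by simp
    moreover have "- (\<rho>*\<gamma>*(norm (y1 - y2))^2) \<le> inner G (y1 - y2)" using ii by simp
    ultimately show ?thesis using i iii iv by linarith
  qed
  hence "\<theta> * b^2 \<le> a * (2 * Rr powr (p-1) + \<rho>*\<gamma>*a + 2*\<rho>*\<gamma>*b)"
    unfolding \<theta>_def by (simp add: algebra_simps power2_eq_square)
  also have "\<dots> \<le> a * Kc"
  proof (intro mult_left_mono)
    have na: "a \<le> 2*\<delta>"
    proof -
      have "a \<le> norm x1 + norm x2" unfolding a_def by (rule norm_triangle_ineq4)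
      thus ?thesis using x1 x2 by (simp add: U_def)
    qed
    have nb: "b \<le> 2*Rr"
    proof -
      have "b \<le> norm u1 + norm u2" unfolding b_def by (rule norm_triangle_ineq4)
      thus ?thesis using nu by simp
    qed
    have "\<rho>*\<gamma>*a \<le> \<rho>*\<gamma>*(2*\<delta>)" using na rho gpos by simp
    moreover have "\<rho>*\<gamma>*b \<le> \<rho>*\<gamma>*(2*Rr)" using nb rho gpos by simp
    ultimately show "2 * Rr powr (p-1) + \<rho>*\<gamma>*a + 2*\<rho>*\<gamma>*b \<le> Kc" unfolding Kc_def by linarith
  qed (simp add: a_def)
  finally show ?thesis by (simp add: u1_def u2_def b_def a_def mult.commute)
qed

lemma uniq:
  assumes x: "x \<in> U" and y1: "y1 \<in> prox p \<gamma> \<phi> x" and y2: "y2 \<in> prox p \<gamma> \<phi> x"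
  shows "y1 = y2"
proof -
  have "\<theta> * (norm ((x - y1) - (x - y2)))^2 \<le> 0" using KE[OF x y1 x y2] by simp
  hence "(norm ((x - y1) - (x - y2)))^2 \<le> 0" using theta_pos by (simp add: mult_le_0_iff)
  thus ?thesis by simp
qed

definition "P x = the_elem (prox p \<gamma> \<phi> x)"

lemma prox_single: "x \<in> U \<Longrightarrow> prox p \<gamma> \<phi> x = {P x}"
proof -
  assume x: "x \<in> U"
  obtain y where y: "y \<in> prox p \<gamma> \<phi> x" using S5 by blast
  have "prox p \<gamma> \<phi> x = {y}" using y uniq[OF x y] by blast
  thus ?thesis by (simp add: P_def)
qed

lemma P_in: "x \<in> U \<Longrightarrow> P x \<in> prox p \<gamma> \<phi> x" using prox_single by blast

lemma P_cont: "continuous_on U P"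
  unfolding continuous_on_iff
proof (intro ballI allI impI)
  fix x e assume x: "x \<in> U" and e: "(e::real) > 0"
  define d where "d = min (e/2) (\<theta> * (e/2)^2 / Kc)"
  have dp: "d > 0" using e theta_pos Kc_pos by (simp add: d_def)
  show "\<exists>d>0. \<forall>x'\<in>U. dist x' x < d \<longrightarrow> dist (P x') (P x) < e"
  proof (intro exI[of _ d] conjI dp ballI impI)
    fix x' assume x': "x' \<in> U" and dx: "dist x' x < d"
    define a where "a = norm (x' - x)"
    define b where "b = norm ((x' - P x') - (x - P x))"
    have a1: "a < e/2" and a2: "a < \<theta> * (e/2)^2 / Kc" using dx by (auto simp: d_def a_def dist_norm)
    have "\<theta> * b^2 \<le> Kc * a" using KE[OF x' P_in[OF x'] x P_in[OF x]] by (simp add: a_def b_def)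
    also have "\<dots> < Kc * (\<theta> * (e/2)^2 / Kc)" using a2 Kc_pos by (intro mult_strict_left_mono) auto
    also have "\<dots> = \<theta> * (e/2)^2" using Kc_pos by simp
    finally have "b^2 < (e/2)^2" using theta_pos by simp
    hence b1: "b < e/2" using power_less_imp_less_base[of b 2 "e/2"] e by simp
    have "P x' - P x = (x' - x) - ((x' - P x') - (x - P x))" by simp
    hence "norm (P x' - P x) \<le> a + b" unfolding a_def b_def by (metis norm_triangle_ineq4)
    thus "dist (P x') (P x) < e" using a1 b1 by (simp add: dist_norm)
  qed
qed

lemma U_open: "open U" by (simp add: U_def)

lemma P_isCont: "x \<in> U \<Longrightarrow> isCont P x"
  using P_cont U_open continuous_on_eq_continuous_at by blast

definition "G x = (1/\<gamma>) *\<^sub>R gp p (x - P x)"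
definition "F x = real_of_ereal (moreau_env p \<gamma> \<phi> x)"

lemma env_at: "x \<in> U \<Longrightarrow> moreau_env p \<gamma> \<phi> x = Phi x (P x)"
proof -
  assume x: "x \<in> U"
  have "\<forall>z. Phi x (P x) \<le> Phi x z" using P_in[OF x] by (simp add: prox_iff)
  hence "(INF y. Phi x y) = Phi x (P x)" by (intro antisym INF_lower INF_greatest) auto
  thus ?thesis by (simp add: env_eq)
qed

lemma F_eq:
  assumes x: "x \<in> U"
  shows "moreau_env p \<gamma> \<phi> x = ereal (F x)"
    and "F x = real_of_ereal (\<phi> (P x)) + norm (x - P x) powr p / (p*\<gamma>)"
proof -
  obtain r where r: "\<phi> (P x) = ereal r" using S4(3)[OF P_in[OF x]] by (cases "\<phi> (P x)") auto
  have e: "moreau_env p \<gamma> \<phi> x = ereal (r + norm (x - P x) powr p / (p*\<gamma>))"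
    using env_at[OF x] r by (simp add: Phi_def)
  thus "moreau_env p \<gamma> \<phi> x = ereal (F x)" by (simp add: F_def)
  show "F x = real_of_ereal (\<phi> (P x)) + norm (x - P x) powr p / (p*\<gamma>)" using e r by (simp add: F_def)
qed

lemma F_le:
  assumes x: "x \<in> U" and z: "\<bar>\<phi> z\<bar> \<noteq> \<infinity>"
  shows "F x \<le> real_of_ereal (\<phi> z) + norm (x - z) powr p / (p*\<gamma>)"
proof -
  obtain r where r: "\<phi> z = ereal r" using z by (cases "\<phi> z") auto
  have "moreau_env p \<gamma> \<phi> x \<le> Phi x z" unfolding env_eq by (rule INF_lower) simp
  hence "ereal (F x) \<le> ereal (r + norm (x - z) powr p / (p*\<gamma>))" using F_eq(1)[OF x] r by (simp add: Phi_def)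
  thus ?thesis using r by simp
qed

lemma gp_eps:
  assumes "isCont f xb" and "e > 0"
  shows "\<exists>d>0. \<forall>x'. norm (x' - xb) < d \<longrightarrow> norm (gp p (f x') - gp p (f xb)) < e*\<gamma>"
proof -
  have "isCont (\<lambda>x'. gp p (f x')) xb" using isCont_o2[OF assms(1) L6[OF p1]] .
  thus ?thesis unfolding continuous_at_eps_delta dist_norm using assms(2) gpos by (metis mult_pos_pos)
qed

lemma F_deriv:
  assumes x: "x \<in> U"
  shows "(F has_derivative (\<lambda>h. inner (G x) h)) (at x)"
  unfolding has_derivative_at_alt
proof (intro conjI allI impI bounded_linear_inner_right)
  fix e :: real assume e: "e > 0"
  define y where "y = P x"
  obtain d0 where d0: "d0 > 0" "ball x d0 \<subseteq> U" using U_open x open_contains_ball by blast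
  obtain d1 where d1: "d1 > 0" "\<And>x'. norm (x' - x) < d1 \<Longrightarrow> norm (gp p (x' - y) - gp p (x - y)) < e*\<gamma>"
    using gp_eps[where f="\<lambda>x'. x' - y" and xb=x and e=e] e by (auto intro!: continuous_intros)
  obtain d2 where d2: "d2 > 0" "\<And>x'. norm (x' - x) < d2 \<Longrightarrow> norm (gp p (x - P x') - gp p (x - P x)) < e*\<gamma>"
    using gp_eps[where f="\<lambda>x'. x - P x'" and xb=x and e=e] e P_isCont[OF x] by (auto intro!: continuous_intros)
  show "\<exists>d>0. \<forall>x'. norm (x' - x) < d \<longrightarrow> norm (F x' - F x - inner (G x) (x' - x)) \<le> e * norm (x' - x)"
  proof (intro exI[of _ "min d0 (min d1 d2)"] conjI allI impI)
    show "min d0 (min d1 d2) > 0" using d0 d1 d2 by simp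
    fix x' assume dx: "norm (x' - x) < min d0 (min d1 d2)"
    have x': "x' \<in> U" using d0 dx by (auto simp: dist_norm norm_minus_commute)
    define y' where "y' = P x'"
    define h where "h = x' - x"
    have fy: "\<bar>\<phi> y\<bar> \<noteq> \<infinity>" using S4(3)[OF P_in[OF x]] by (simp add: y_def)
    have fy': "\<bar>\<phi> y'\<bar> \<noteq> \<infinity>" using S4(3)[OF P_in[OF x']] by (simp add: y'_def)
    have Fx: "F x = real_of_ereal (\<phi> y) + norm (x - y) powr p / (p*\<gamma>)" using F_eq(2)[OF x] by (simp add: y_def)
    have Fx': "F x' = real_of_ereal (\<phi> y') + norm (x' - y') powr p / (p*\<gamma>)" using F_eq(2)[OF x'] by (simp add: y'_def)
    have up0: "F x' \<le> real_of_ereal (\<phi> y) + norm (x' - y) powr p / (p*\<gamma>)" by (rule F_le[OF x' fy])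
    have lo0: "F x \<le> real_of_ereal (\<phi> y') + norm (x - y') powr p / (p*\<gamma>)" by (rule F_le[OF x fy'])
    have cv1: "norm (x' - y) powr p + p * inner (gp p (x' - y)) (x - x') \<le> norm (x - y) powr p"
      using L4[OF p1 p2, of "x' - y" "x - y"] by simp
    have cv2: "norm (x - y') powr p + p * inner (gp p (x - y')) (x' - x) \<le> norm (x' - y') powr p"
      using L4[OF p1 p2, of "x - y'" "x' - y'"] by simp
    have g1: "norm (gp p (x' - y) - gp p (x - y)) \<le> e*\<gamma>" using d1(2)[of x'] dx by simp
    have g2: "norm (gp p (x - y') - gp p (x - y)) \<le> e*\<gamma>" using d2(2)[of x'] dx by (simp add: y_def y'_def)
    have pg: "p*\<gamma> > 0" by (rule pg_pos)
    have "F x' - F x \<le> (norm (x' - y) powr p - norm (x - y) powr p) / (p*\<gamma>)"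
      using up0 Fx by (simp add: diff_divide_distrib)
    also have "\<dots> \<le> (p * inner (gp p (x' - y)) h) / (p*\<gamma>)"
    proof -
      have "inner (gp p (x' - y)) (x - x') = - inner (gp p (x' - y)) h"
        by (simp add: h_def inner_diff_right)
      hence "norm (x' - y) powr p - norm (x - y) powr p \<le> p * inner (gp p (x' - y)) h" using cv1 by simp
      thus ?thesis using pg by (intro divide_right_mono) auto
    qed
    also have "\<dots> = inner (gp p (x' - y)) h / \<gamma>" using p1 by simp
    also have "\<dots> = inner (G x) h + inner (gp p (x' - y) - gp p (x - y)) h / \<gamma>"
      by (simp add: G_def y_def inner_diff_left diff_divide_distrib)
    also have "\<dots> \<le> inner (G x) h + e * norm h"
    proof -
      have "inner (gp p (x' - y) - gp p (x - y)) h \<le> e*\<gamma> * norm h"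
        using norm_cauchy_schwarz[of "gp p (x' - y) - gp p (x - y)" h] mult_right_mono[OF g1 norm_ge_zero[of h]]
        by linarith
      hence "inner (gp p (x' - y) - gp p (x - y)) h / \<gamma> \<le> e * norm h" using gpos by (simp add: field_simps)
      thus ?thesis by simp
    qed
    finally have up: "F x' - F x - inner (G x) h \<le> e * norm h" by simp
    have "(norm (x' - y') powr p - norm (x - y') powr p) / (p*\<gamma>) \<le> F x' - F x"
      using lo0 Fx' by (simp add: diff_divide_distrib)
    moreover have "(p * inner (gp p (x - y')) h) / (p*\<gamma>) \<le> (norm (x' - y') powr p - norm (x - y') powr p) / (p*\<gamma>)"
      using cv2 pg by (intro divide_right_mono) (auto simp: h_def)
    moreover have "(p * inner (gp p (x - y')) h) / (p*\<gamma>) = inner (G x) h + inner (gp p (x - y') - gp p (x - y)) h / \<gamma>"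
      using p1 by (simp add: G_def y_def inner_diff_left diff_divide_distrib)
    moreover have "- (e * norm h) \<le> inner (gp p (x - y') - gp p (x - y)) h / \<gamma>"
    proof -
      have "- inner (gp p (x - y') - gp p (x - y)) h \<le> e*\<gamma> * norm h"
      proof -
        have "- inner (gp p (x - y') - gp p (x - y)) h \<le> norm (gp p (x - y') - gp p (x - y)) * norm h"
          using norm_cauchy_schwarz[of "-(gp p (x - y') - gp p (x - y))" h] by (simp only: inner_minus_left norm_minus_cancel)
        thus ?thesis using mult_right_mono[OF g2 norm_ge_zero[of h]] by linarith
      qed
      hence "- inner (gp p (x - y') - gp p (x - y)) h / \<gamma> \<le> e * norm h" using gpos by (simp add: field_simps)
      thus ?thesis by simp
    qed
    ultimately have lo: "- (e * norm h) \<le> F x' - F x - inner (G x) h" by linarith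
    show "norm (F x' - F x - inner (G x) (x' - x)) \<le> e * norm (x' - x)"
      using up lo by (simp add: h_def abs_le_iff)
  qed
qed

lemma G_cont: "continuous_on U G"
proof -
  have "\<forall>x\<in>U. isCont G x"
  proof
    fix x assume x: "x \<in> U"
    have "isCont (\<lambda>x. x - P x) x" using P_isCont[OF x] by (intro continuous_intros)
    hence "isCont (\<lambda>x. gp p (x - P x)) x" using isCont_o2 L6[OF p1] by blast
    thus "isCont G x" unfolding G_def by (intro continuous_intros)
  qed
  thus ?thesis using U_open continuous_on_eq_continuous_at by blast
qed

lemma main: "open U \<and> 0 \<in> U \<and> (\<forall>x\<in>U. \<exists>y. prox p \<gamma> \<phi> x = {y}) \<and>
           continuous_on U (\<lambda>x. the_elem (prox p \<gamma> \<phi> x)) \<and> C1_on U (moreau_env p \<gamma> \<phi>)"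
proof (intro conjI)
  show "open U" by (rule U_open)
  show "0 \<in> U" using dpos by (simp add: U_def)
  show "\<forall>x\<in>U. \<exists>y. prox p \<gamma> \<phi> x = {y}" using prox_single by blast
  show "continuous_on U (\<lambda>x. the_elem (prox p \<gamma> \<phi> x))" using P_cont unfolding P_def .
  show "C1_on U (moreau_env p \<gamma> \<phi>)" unfolding C1_on_def
    using F_eq(1) F_deriv G_cont by blast
qed

end


theorem theorem5:
  fixes \<phi> :: "'a::euclidean_space \<Rightarrow> ereal"
    and p q M \<epsilon> \<rho> \<gamma> :: real
  assumes p: "1 < p" "p \<le> 2"
    and proper: "proper_fun \<phi>" and lsc: "lsc \<phi>"
    and M: "M > 0" and calm: "p_calm p \<phi> 0 M"
    and phi0: "\<phi> 0 = 0"
    and q: "q \<ge> 2" and eps: "\<epsilon> > 0" and rho: "\<rho> > 0"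
    and sub0: "0 \<in> limiting_subdiff \<phi> 0"
    and preg: "q_prox_regular q \<phi> 0 0 \<epsilon> \<rho>"
    and gamma: "(p < 2 \<and> 0 < \<gamma> \<and> \<gamma> < 2 powr (1 - p) / (M * p)) \<or>
                (p = 2 \<and> 0 < \<gamma> \<and> \<gamma> < min (1 / (4 * M)) (1 / \<rho>))"
  shows "\<exists>U. open U \<and> 0 \<in> U \<and>
           (\<forall>x\<in>U. \<exists>y. prox p \<gamma> \<phi> x = {y}) \<and>
           continuous_on U (\<lambda>x. the_elem (prox p \<gamma> \<phi> x)) \<and>
           C1_on U (moreau_env p \<gamma> \<phi>)"
proof -
  have notminf: "\<And>x. \<phi> x \<noteq> -\<infinity>" using proper by (simp add: proper_fun_def)
  have gpos: "0 < \<gamma>" using gamma by auto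
  have Mp: "M * p > 0" using M p by simp
  have gM: "M*p*\<gamma> < 1"
  proof (cases "p < 2")
    case True
    hence g: "\<gamma> < 2 powr (1 - p) / (M * p)" using gamma by auto
    hence "\<gamma> * (M*p) < 2 powr (1 - p)" using Mp by (simp add: pos_less_divide_eq)
    moreover have "2 powr (1 - p) < 2 powr 0" using p by (intro powr_less_mono) auto
    ultimately show ?thesis by (simp add: mult.commute)
  next
    case False
    hence "p = 2" "\<gamma> < 1 / (4 * M)" using gamma by auto
    hence "\<gamma> * (4*M) < 1" using M by (simp add: pos_less_divide_eq)
    moreover have "0 < M*\<gamma>" using gpos M by simp
    moreover have "\<gamma> * (4*M) = 4*(M*\<gamma>)" "M*p*\<gamma> = 2*(M*\<gamma>)" using \<open>p = 2\<close> by simp_all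
    ultimately show ?thesis by linarith
  qed
  have g2: "p = 2 \<Longrightarrow> \<gamma>*\<rho> < 1"
  proof -
    assume "p = 2"
    hence "\<gamma> < 1 / \<rho>" using gamma by auto
    thus "\<gamma>*\<rho> < 1" using rho by (simp add: pos_less_divide_eq)
  qed
  interpret S \<phi> p M \<gamma> \<rho> q \<epsilon>
    using p notminf lsc M calm phi0 q eps rho preg gpos gM g2 by unfold_locales auto
  obtain \<delta> where d: "\<delta>>0" "C*\<delta> \<le> \<epsilon>" "\<delta> powr p / (p*\<gamma>) < \<epsilon>" "((1+C)*\<delta>) powr (p-1) / \<gamma> \<le> \<epsilon>"
      "2*C*\<delta> \<le> 1" "\<rho>*\<gamma> < (p-1) * ((1+C)*\<delta>) powr (p-2)"
    using delta_exists by blast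
  interpret S2 \<phi> p M \<gamma> \<rho> q \<epsilon> \<delta> using d by unfold_locales auto
  show ?thesis using main by blast
qed

end
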